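(* Let $n\ge2$ and let $\mathcal{C}(n)=\{\mathcal{C}(n,d')\}_{d'>0}$ be a family of spherical codes in $S^{n-1}$, where $\mathcal{C}(n,d')$ has minimum distance at least $d'$ and cardinality $M(n,d')$, whose asymptotic center density $\overline{\Delta}_c(\mathcal{C}(n))=\lim_{d\to0}\frac{M(n,d)}{\mathbb{S}_n}\left(\frac d2\right)^{n-1}$ exists. Let $\mathrm{SCHF}[2n;\mathcal{C}(n)]$ be the family of spherical codes in $S^{2n-1}$ built from $\mathcal{C}(n)$ by Hopf foliations (see context), with cardinalities $M(2n,d)$. Then its asymptotic center density is $$\overline{\Delta}_c(\mathrm{SCHF}[2n;\mathcal{C}(n)]):=\lim_{d\to0}\frac{M(2n,d)}{\mathbb{S}_{2n}}\left(\frac d2\right)^{2n-1}=\frac12\left(\overline{\Delta}_c(\mathcal{C}(n))\right)^2.$$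
   Context: $\mathbb{S}_m=\frac{m\pi^{m/2}}{\Gamma(1+m/2)}$ is the surface area of the unit sphere $S^{m-1}\subset\mathbb{R}^m$. A spherical code in $S^{m-1}$ with minimum distance at least $d$ is a finite subset of $S^{m-1}$ whose points are pairwise at Euclidean distance $\ge d$ (for $d'>2$, including the formal value $d'=+\infty$, such a code has one point). Construction $\mathrm{SCHF}[2n;\mathcal{C}(n)]$ for $d\in(0,2]$: put $\Delta\eta=2\arcsin(d/2)$, $t=\lfloor\pi/(4\arcsin(d/2))\rfloor$ and $\eta_i=\pi/4+i\Delta\eta$ for integers $i$ with $|i|\le\lfloor t/2\rfloor$. The code is the union over these $i$ of $\{(\cos\eta_i\,\mathbf{x};\sin\eta_i\,\mathbf{y}):\mathbf{x}\in\mathcal{C}(n,d/\cos\eta_i),\ \mathbf{y}\in\mathcal{C}(n,d/\sin\eta_i)\}\subset\mathbb{R}^{2n}$, with $d/0:=+\infty$; its cardinality is $M(2n,d)=\sum_{|i|\le\lfloor t/2\rfloor}M(n,d/\cos\eta_i)\,M(n,d/\sin\eta_i)$. *)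

theory Defs
  imports "HOL-Analysis.Analysis"
begin

text \<open>Surface area of the unit sphere in R^m.\<close>
definition sphere_area :: "nat \<Rightarrow> real" where
  "sphere_area m = real m * pi powr (real m / 2) / Gamma (1 + real m / 2)"

definition spherical_code :: "real \<Rightarrow> ('a::real_normed_vector) set \<Rightarrow> bool" where
  "spherical_code d A \<longleftrightarrow> finite A \<and> A \<subseteq> sphere 0 1 \<and>
     (\<forall>x\<in>A. \<forall>y\<in>A. x \<noteq> y \<longrightarrow> d \<le> dist x y)"

text \<open>Cardinality M(n, d / c) of the component code, with the convention
  d / 0 = +infinity and M(n, +infinity) = 1.\<close>
definition card_div :: "(real \<Rightarrow> nat) \<Rightarrow> real \<Rightarrow> real \<Rightarrow> nat" where
  "card_div M d c = (if c = 0 then 1 else M (d / c))"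

text \<open>Cardinality M(2n,d) of SCHF[2n; C(n)] at minimum distance d, for d in (0,2].\<close>
definition schf_card :: "(real \<Rightarrow> nat) \<Rightarrow> real \<Rightarrow> nat" where
  "schf_card M d =
     (let \<Delta> = 2 * arcsin (d / 2);
          t = \<lfloor>pi / (4 * arcsin (d / 2))\<rfloor>;
          \<eta> = (\<lambda>i::int. pi / 4 + of_int i * \<Delta>)
      in \<Sum>i\<in>{- (t div 2) .. t div 2}. card_div M d (cos (\<eta> i)) * card_div M d (sin (\<eta> i)))"

end

theory Submission imports Defs begin

definition FF :: "nat \<Rightarrow> real \<Rightarrow> real" where "FF m x = (sin x * cos x) ^ m"

lemma FF_cont: "continuous_on S (FF m)"
  unfolding FF_def by (intro continuous_intros)

lemma FF_abs: "\<bar>FF m x\<bar> \<le> 1"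
proof -
  have "\<bar>sin x * cos x\<bar> \<le> 1" by (simp add: abs_mult mult_le_one)
  then show ?thesis unfolding FF_def by (metis abs_ge_zero power_abs power_le_one)
qed

lemma FF_deriv: "(FF m has_real_derivative (real m * (sin x * cos x) ^ (m - 1) * (cos x * cos x - sin x * sin x))) (at x within S)"
proof -
  have "((\<lambda>x. sin x * cos x) has_real_derivative (cos x * cos x - sin x * sin x)) (at x within S)"
    by (auto intro!: derivative_eq_intros)
  from DERIV_power[OF this, of m] show ?thesis unfolding FF_def by (simp add: algebra_simps)
qed

lemma FF_lip: "\<bar>FF m x - FF m y\<bar> \<le> real m * \<bar>x - y\<bar>"
proof -
  have b: "norm (real m * (sin z * cos z) ^ (m - 1) * (cos z * cos z - sin z * sin z)) \<le> real m" for z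
  proof -
    have "\<bar>sin z * cos z\<bar> \<le> 1" by (simp add: abs_mult mult_le_one)
    then have 1: "\<bar>(sin z * cos z) ^ (m - 1)\<bar> \<le> 1" by (metis abs_ge_zero power_abs power_le_one)
    have "cos z * cos z - sin z * sin z = cos (2*z)" by (simp add: cos_double power2_eq_square)
    then have 2: "\<bar>cos z * cos z - sin z * sin z\<bar> \<le> 1" by simp
    have "\<bar>(sin z * cos z) ^ (m - 1) * (cos z * cos z - sin z * sin z)\<bar> \<le> 1"
      using 1 2 by (simp add: abs_mult mult_le_one)
    then show ?thesis by (simp add: abs_mult mult.assoc mult_left_le)
  qed
  show ?thesis
    using field_differentiable_bound[of UNIV "FF m", OF convex_UNIV FF_deriv b] by simp
qed

lemma sum_telescope_int:
  fixes f :: "int \<Rightarrow> real"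
  shows "(\<Sum>i\<in>{a..a + int j}. f (i+1) - f i) = f (a + int j + 1) - f a"
proof (induction j)
  case 0 then show ?case by simp
next
  case (Suc j)
  have "{a..a + int (Suc j)} = insert (a + int j + 1) {a..a + int j}" by auto
  then show ?case using Suc by simp
qed

lemma riemann_FF:
  fixes \<Delta> :: real and k :: int
  assumes D0: "0 < \<Delta>" and D1: "\<Delta> \<le> 1" and k1: "k * \<Delta> \<le> pi/4" and k2: "pi/4 - \<Delta> < k * \<Delta>"
  shows "\<bar>\<Delta> * (\<Sum>i\<in>{-k..k}. FF m (pi/4 + i*\<Delta>)) - integral {0..pi/2} (FF m)\<bar> \<le> (2 + 2*m) * \<Delta>"
proof -
  define G where "G x = integral {-1..x} (FF m)" for x
  have dG: "(G has_real_derivative FF m x) (at x within {-1..3})" if "x \<in> {-1..3}" for x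
    unfolding G_def by (rule integral_has_real_derivative[OF FF_cont that])
  have Glip: "\<bar>G x - G y\<bar> \<le> 1 * \<bar>x - y\<bar>" if "x \<in> {-1..3}" "y \<in> {-1..3}" for x y
    using field_differentiable_bound[of "{-1..3}" G "FF m" 1, OF convex_real_interval(5) dG] that FF_abs
    by auto
  define p where "p i = pi/4 + (of_int i - 1/2) * \<Delta>" for i :: int
  have k0: "0 \<le> k"
  proof (rule ccontr)
    assume "\<not> 0 \<le> k" then have "k \<le> -1" by simp
    then have "k * \<Delta> \<le> -1 * \<Delta>" using D0 by (intro mult_right_mono) auto
    with k2 have "pi/4 < 0" by linarith
    then show False using pi_gt3 by linarith
  qed
  have pin: "p i \<in> {-1..3}" if "-k \<le> i" "i \<le> k + 1" for i
  proof -
    have a: "(of_int i - 1/2) * \<Delta> \<ge> (- of_int k - 1/2) * \<Delta>"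
      using that D0 by (intro mult_right_mono) auto
    have b: "(of_int i - 1/2) * \<Delta> \<le> (of_int k + 1/2) * \<Delta>"
      using that D0 by (intro mult_right_mono) auto
    show ?thesis using a b k1 D1 pi_gt3 pi_less_4 unfolding p_def by (auto simp: algebra_simps)
  qed
  have cell: "\<bar>(G (p (i+1)) - G (p i)) - \<Delta> * FF m (pi/4 + i*\<Delta>)\<bar> \<le> real m * \<Delta> / 2 * \<Delta>"
    if "-k \<le> i" "i \<le> k" for i
  proof -
    define c where "c = pi/4 + i*\<Delta>"
    define H where "H x = G x - x * FF m c" for x
    have sub: "{p i..p (i+1)} \<subseteq> {-1..3}" using pin[of i] pin[of "i+1"] that by auto
    have dH: "(H has_real_derivative (FF m x - FF m c)) (at x within {p i..p (i+1)})"
      if "x \<in> {p i..p (i+1)}" for x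
      unfolding H_def
      using dG[of x] sub that
      by (auto intro!: derivative_eq_intros intro: DERIV_subset)
    have bd: "norm (FF m x - FF m c) \<le> real m * \<Delta> / 2" if "x \<in> {p i..p (i+1)}" for x
    proof -
      have "\<bar>x - c\<bar> \<le> \<Delta>/2" using that unfolding p_def c_def by (simp add: algebra_simps abs_if)
      then have "real m * \<bar>x - c\<bar> \<le> real m * (\<Delta>/2)" by (intro mult_left_mono) auto
      then show ?thesis using FF_lip[of m x c] by simp
    qed
    have pl: "p i \<le> p (i+1)" using D0 unfolding p_def by (auto simp: algebra_simps)
    have "norm (H (p (i+1)) - H (p i)) \<le> real m * \<Delta> / 2 * norm (p (i+1) - p i)"
      using field_differentiable_bound[of "{p i..p (i+1)}" H "\<lambda>x. FF m x - FF m c", OF convex_real_interval(5) dH bd, of "p (i+1)" "p i"] pl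
      by auto
    moreover have "p (i+1) - p i = \<Delta>" unfolding p_def by (simp add: algebra_simps)
    ultimately show ?thesis using D0 unfolding H_def c_def by (simp add: algebra_simps)
  qed
  have tel: "(\<Sum>i\<in>{-k..k}. G (p (i+1)) - G (p i)) = G (p (k+1)) - G (p (-k))"
    using sum_telescope_int[of "\<lambda>i. G (p i)" "-k" "nat (2*k)"] k0 by simp
  have "\<bar>(G (p (k+1)) - G (p (-k))) - \<Delta> * (\<Sum>i\<in>{-k..k}. FF m (pi/4 + i*\<Delta>))\<bar>
      = \<bar>\<Sum>i\<in>{-k..k}. ((G (p (i+1)) - G (p i)) - \<Delta> * FF m (pi/4 + i*\<Delta>))\<bar>"
    by (simp add: tel[symmetric] sum_subtractf sum_distrib_left)
  also have "\<dots> \<le> (\<Sum>i\<in>{-k..k}. \<bar>(G (p (i+1)) - G (p i)) - \<Delta> * FF m (pi/4 + i*\<Delta>)\<bar>)"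
    by (rule sum_abs)
  also have "\<dots> \<le> (\<Sum>i\<in>{-k..k}. real m * \<Delta> / 2 * \<Delta>)"
    by (intro sum_mono cell) auto
  also have "\<dots> = (2*k+1) * \<Delta> * (real m * \<Delta> / 2)" using k0 by (simp add: algebra_simps)
  also have "\<dots> \<le> 3 * (real m * \<Delta> / 2)"
  proof (intro mult_right_mono)
    show "(2*k+1) * \<Delta> \<le> 3" using k1 D1 pi_less_4 by (simp add: algebra_simps)
  qed (use D0 in auto)
  finally have S1: "\<bar>(G (p (k+1)) - G (p (-k))) - \<Delta> * (\<Sum>i\<in>{-k..k}. FF m (pi/4 + i*\<Delta>))\<bar> \<le> 2 * m * \<Delta>"
    using D0 mult_nonneg_nonneg[of "real m" \<Delta>] by linarith
  have e1: "\<bar>G (p (k+1)) - G (pi/2)\<bar> \<le> \<Delta>"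
    using Glip[of "p (k+1)" "pi/2"] pin[of "k+1"] k0 k1 k2 pi_gt3 pi_less_4 unfolding p_def
    by (auto simp: algebra_simps)
  have e2: "\<bar>G (p (-k)) - G 0\<bar> \<le> \<Delta>"
    using Glip[of "p (-k)" "0"] pin[of "-k"] k0 k1 k2 pi_gt3 pi_less_4 unfolding p_def
    by (auto simp: algebra_simps)
  have "integral {-1..0} (FF m) + integral {0..pi/2} (FF m) = integral {-1..pi/2} (FF m)"
    using Henstock_Kurzweil_Integration.integral_combine[where a="-1" and c=0 and b="pi/2" and f="FF m"] pi_gt3 integrable_continuous_real[OF FF_cont] by auto
  then have I: "integral {0..pi/2} (FF m) = G (pi/2) - G 0" unfolding G_def by simp
  show ?thesis using S1 e1 e2 I by (simp add: algebra_simps abs_diff_le_iff)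
qed

lemma integral_FF:
  assumes m1: "m \<ge> 1"
  shows "integral {0..pi/2} (FF m) = Beta ((m+1)/2) ((m+1)/2) / 2"
proof -
  define f where "f t = sqrt (t * (1 - t)) ^ (m - 1)" for t :: real
  define g where "g x = sin x ^ 2" for x :: real
  have fc: "continuous_on {0..1} f" unfolding f_def by (intro continuous_intros)
  have gd: "(g has_field_derivative (2 * sin x * cos x)) (at x within {0..pi/2})" for x
    unfolding g_def by (auto intro!: derivative_eq_intros)
  have gs: "g ` {0..pi/2} \<subseteq> {0..1}" unfolding g_def
    by (auto simp: abs_square_le_1 intro: zero_le_power2)
  have hs: "((\<lambda>x. (2 * sin x * cos x) *\<^sub>R f (g x)) has_integral integral {g 0..g (pi/2)} f) {0..pi/2}"
    by (rule has_integral_substitution[OF _ _ gs fc gd]) (auto simp: g_def)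
  have eq: "(2 * sin x * cos x) *\<^sub>R f (g x) = 2 * FF m x" if "x \<in> {0..pi/2}" for x
  proof -
    have s: "0 \<le> sin x" "0 \<le> cos x" using that by (auto intro!: sin_ge_zero cos_ge_zero)
    have c: "1 - sin x ^ 2 = cos x ^ 2" using sin_cos_squared_add[of x] by linarith
    have "sin x ^ 2 * (1 - sin x ^ 2) = (sin x * cos x)^2"
      by (simp only: c power_mult_distrib)
    then have "f (g x) = \<bar>sin x * cos x\<bar> ^ (m - 1)" unfolding f_def g_def by (simp only: real_sqrt_abs)
    also have "\<dots> = (sin x * cos x) ^ (m - 1)" using s by simp
    finally have fg: "f (g x) = (sin x * cos x) ^ (m - 1)" .
    obtain j where j: "m = Suc j" using m1 by (cases m) auto
    show ?thesis unfolding FF_def fg j by simp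
  qed
  have gg: "g 0 = 0" "g (pi/2) = 1" by (auto simp: g_def)
  have h1: "((\<lambda>x. 2 * FF m x) has_integral integral {0..1} f) {0..pi/2}"
    by (rule has_integral_eq[OF eq hs[unfolded gg]])
  have a0: "(m+1)/2 > (0::real)" by simp
  have h2: "(f has_integral Beta ((m+1)/2) ((m+1)/2)) {0..1}"
  proof (rule has_integral_spike_finite[OF _ _ has_integral_Beta_real[OF a0 a0]])
    show "finite {0, 1::real}" by simp
  next
    fix t :: real assume "t \<in> {0..1} - {0, 1}"
    then have t: "0 < t" "t < 1" by auto
    have y: "t * (1 - t) > 0" using t by simp
    have "sqrt (t * (1 - t)) ^ (m - 1) = ((t * (1 - t)) powr (1/2)) ^ (m - 1)"
      using y by (simp add: powr_half_sqrt)
    also have "\<dots> = ((t * (1 - t)) powr (1/2)) powr (real (m - 1))"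
      using y by (subst powr_realpow) auto
    also have "\<dots> = (t * (1 - t)) powr (real (m - 1) / 2)"
      by (simp add: powr_powr)
    also have "\<dots> = t powr ((real m + 1) / 2 - 1) * (1 - t) powr ((real m + 1) / 2 - 1)"
      using t m1 by (subst powr_mult) (auto simp: of_nat_diff field_simps)
    finally have X: "sqrt (t * (1 - t)) ^ (m - 1) = t powr ((real m + 1) / 2 - 1) * (1 - t) powr ((real m + 1) / 2 - 1)" .
    show "f t = t powr (real (m + 1) / 2 - 1) * (1 - t) powr (real (m + 1) / 2 - 1)"
      using X unfolding f_def by simp
  qed
  have "integral {0..pi/2} (\<lambda>x. 2 * FF m x) = Beta ((m+1)/2) ((m+1)/2)"
    using h1 h2 integral_unique by (metis integral_unique)
  then show ?thesis using integral_mult_right[where c=2 and S="{0..pi/2}" and f="FF m"] by (simp add: add.commute mult.commute)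
qed

lemma area_identity:
  assumes n1: "n \<ge> 1"
  shows "sphere_area n ^ 2 * (Beta (real n/2) (real n/2) / 2) = sphere_area (2*n)"
proof -
  have h0: "real n / 2 > 0" using n1 by simp
  have g1: "Gamma (1 + real n / 2) = real n / 2 * Gamma (real n / 2)"
    using Gamma_plus1[of "real n / 2"] h0 by (simp add: add.commute nonpos_Ints_def)
  have g2: "Gamma (1 + real (2*n) / 2) = real n * Gamma (real n)"
    using Gamma_plus1[of "real n"] n1 by (simp add: add.commute nonpos_Ints_def)
  have p1: "Gamma (real n / 2) > 0" "Gamma (real n) > 0" using n1 by (auto intro!: Gamma_real_pos)
  have pp: "(pi powr (real n / 2)) ^ 2 = pi powr (real n)"
    by (simp add: powr_realpow[symmetric] powr_powr)
  show ?thesis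
    unfolding sphere_area_def Beta_def g1 g2 power_mult_distrib power_divide pp
    using p1 n1 by (simp add: field_simps power2_eq_square less_imp_neq[symmetric])
qed

lemma riemann_err:
  fixes \<Delta> \<theta> K \<epsilon> :: real and k :: int and e :: "real \<Rightarrow> real"
  assumes D0: "0 < \<Delta>" and D1: "\<Delta> \<le> 1" and k1: "k * \<Delta> \<le> pi/4" and k2: "pi/4 - \<Delta> < k * \<Delta>"
    and th: "0 < \<theta>" and eps: "0 \<le> \<epsilon>"
    and eK: "\<And>x. 0 \<le> x \<Longrightarrow> x \<le> pi/2 \<Longrightarrow> \<bar>e x\<bar> \<le> K"
    and ee: "\<And>x. \<theta> \<le> x \<Longrightarrow> x \<le> pi/2 - \<theta> \<Longrightarrow> \<bar>e x\<bar> \<le> \<epsilon>"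
  shows "\<Delta> * (\<Sum>i\<in>{-k..k}. \<bar>e (pi/4 + i*\<Delta>)\<bar>) \<le> 3 * \<epsilon> + 2 * K * (\<theta> + \<Delta>)"
proof -
  have k0: "0 \<le> k"
  proof (rule ccontr)
    assume "\<not> 0 \<le> k" then have "k \<le> -1" by simp
    then have "k * \<Delta> \<le> -1 * \<Delta>" using D0 by (intro mult_right_mono) auto
    with k2 have "pi/4 < 0" by linarith
    then show False using pi_gt3 by linarith
  qed
  have K0: "0 \<le> K" using eK[of 0] by auto
  define f where "f = \<lfloor>\<theta> / \<Delta>\<rfloor>"
  have f0: "0 \<le> f" unfolding f_def using th D0 by simp
  have fD: "f * \<Delta> \<le> \<theta>" unfolding f_def using D0
    by (metis floor_divide_lower)
  define bad where "bad i \<longleftrightarrow> pi/4 + i*\<Delta> < \<theta> \<or> pi/4 + i*\<Delta> > pi/2 - \<theta>" for i :: int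
  have rng: "0 \<le> pi/4 + i*\<Delta> \<and> pi/4 + i*\<Delta> \<le> pi/2" if "i \<in> {-k..k}" for i
  proof -
    have "\<bar>of_int i\<bar> \<le> (of_int k::real)" using that by auto
    then have "\<bar>of_int i\<bar> * \<Delta> \<le> of_int k * \<Delta>" using D0 by (intro mult_right_mono) auto
    moreover have "\<bar>of_int i * \<Delta>\<bar> = \<bar>of_int i\<bar> * \<Delta>" using D0 by (simp add: abs_mult)
    ultimately have "\<bar>of_int i * \<Delta>\<bar> \<le> pi/4" using k1 by linarith
    then show ?thesis by (auto simp: abs_le_iff)
  qed
  have pt: "\<bar>e (pi/4 + i*\<Delta>)\<bar> \<le> \<epsilon> + (if bad i then K else 0)" if "i \<in> {-k..k}" for i
  proof (cases "bad i")
    case True then show ?thesis using eK[of "pi/4 + i*\<Delta>"] rng[OF that] eps by auto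
  next
    case False then show ?thesis using ee[of "pi/4 + i*\<Delta>"] unfolding bad_def by auto
  qed
  have badsub: "{-k..k} \<inter> {i. bad i} \<subseteq> {-k..-k+f} \<union> {k-f..k}"
  proof
    fix i assume i: "i \<in> {-k..k} \<inter> {i. bad i}"
    show "i \<in> {-k..-k+f} \<union> {k-f..k}"
    proof (cases "pi/4 + i*\<Delta> < \<theta>")
      case True
      then have "(of_int (i + k)) * \<Delta> < \<theta>" using k1 by (simp add: algebra_simps)
      then have "of_int (i + k) < \<theta> / \<Delta>" using D0 by (simp add: field_simps)
      then have "i + k \<le> f" unfolding f_def by linarith
      then show ?thesis using i by auto
    next
      case False
      then have "pi/4 + i*\<Delta> > pi/2 - \<theta>" using i unfolding bad_def by auto
      then have "(of_int (k - i)) * \<Delta> < \<theta>" using k1 by (simp add: algebra_simps)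
      then have "of_int (k - i) < \<theta> / \<Delta>" using D0 by (simp add: field_simps)
      then have "k - i \<le> f" unfolding f_def by linarith
      then show ?thesis using i by auto
    qed
  qed
  have cb: "card ({-k..k} \<inter> {i. bad i}) \<le> 2 * nat (f + 1)"
  proof -
    have "card ({-k..k} \<inter> {i. bad i}) \<le> card ({-k..-k+f} \<union> {k-f..k})"
      by (intro card_mono badsub) auto
    also have "\<dots> \<le> card {-k..-k+f} + card {k-f..k}" by (rule card_Un_le)
    also have "\<dots> = 2 * nat (f + 1)" by simp
    finally show ?thesis .
  qed
  have "(\<Sum>i\<in>{-k..k}. \<bar>e (pi/4 + i*\<Delta>)\<bar>) \<le> (\<Sum>i\<in>{-k..k}. \<epsilon> + (if bad i then K else 0))"
    by (intro sum_mono pt)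
  also have "\<dots> = (2*k+1) * \<epsilon> + K * card ({-k..k} \<inter> {i. bad i})"
    using k0 by (simp add: sum.distrib sum.If_cases)
  finally have s1: "(\<Sum>i\<in>{-k..k}. \<bar>e (pi/4 + i*\<Delta>)\<bar>) \<le> (2*k+1) * \<epsilon> + K * card ({-k..k} \<inter> {i. bad i})" .
  have c1: "\<Delta> * ((2*k+1) * \<epsilon>) \<le> 3 * \<epsilon>"
  proof -
    have "\<Delta> * (2*k+1) \<le> 3" using k1 D1 pi_less_4 by (simp add: algebra_simps)
    then have "\<Delta> * (2*k+1) * \<epsilon> \<le> 3 * \<epsilon>" using eps by (rule mult_right_mono)
    then show ?thesis by (simp add: mult.assoc)
  qed
  have c2: "\<Delta> * (K * card ({-k..k} \<inter> {i. bad i})) \<le> 2 * K * (\<theta> + \<Delta>)"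
  proof -
    have "real (card ({-k..k} \<inter> {i. bad i})) \<le> real (2 * nat (f + 1))"
      using cb of_nat_le_iff by blast
    also have "real (2 * nat (f + 1)) = 2 * (of_int f + 1)" using f0 by simp
    finally have r1: "real (card ({-k..k} \<inter> {i. bad i})) \<le> 2 * (of_int f + 1)" .
    have r2: "\<Delta> * real (card ({-k..k} \<inter> {i. bad i})) \<le> \<Delta> * (2 * (of_int f + 1))"
      using D0 r1 by (intro mult_left_mono) auto
    have r3: "\<Delta> * (2 * (of_int f + 1)) \<le> 2 * (\<theta> + \<Delta>)" using fD by (simp add: algebra_simps)
    have "K * (\<Delta> * real (card ({-k..k} \<inter> {i. bad i}))) \<le> K * (2 * (\<theta> + \<Delta>))"
      using K0 r2 r3 by (intro mult_left_mono) auto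
    then show ?thesis by (simp add: algebra_simps)
  qed
  have "\<Delta> * (\<Sum>i\<in>{-k..k}. \<bar>e (pi/4 + i*\<Delta>)\<bar>) \<le> \<Delta> * ((2*k+1) * \<epsilon> + K * card ({-k..k} \<inter> {i. bad i}))"
    using s1 D0 by (intro mult_left_mono) auto
  then show ?thesis using c1 c2 by (simp add: algebra_simps)
qed

lemma riemann_limit:
  fixes \<psi> :: "real \<Rightarrow> real \<Rightarrow> real" and L K :: real and m :: nat
    and Df :: "real \<Rightarrow> real" and kf :: "real \<Rightarrow> int"
  assumes bnd: "\<And>d c. 0 < d \<Longrightarrow> d \<le> 1 \<Longrightarrow> 0 \<le> c \<Longrightarrow> c \<le> 1 \<Longrightarrow> \<bar>\<psi> d c\<bar> \<le> K"
    and conv: "\<And>\<rho> \<epsilon>. \<rho> > 0 \<Longrightarrow> \<epsilon> > 0 \<Longrightarrow>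
        \<exists>\<delta>>0. \<forall>d c. 0 < d \<longrightarrow> d < \<delta> \<longrightarrow> \<rho> \<le> c \<longrightarrow> c \<le> 1 \<longrightarrow> \<bar>\<psi> d c - L * c^m\<bar> \<le> \<epsilon>"
    and Dl: "(Df \<longlongrightarrow> 0) (at_right 0)"
    and Dk: "eventually (\<lambda>d. 0 < Df d \<and> kf d * Df d \<le> pi/4 \<and> pi/4 - Df d < kf d * Df d) (at_right 0)"
  shows "((\<lambda>d. Df d * (\<Sum>i\<in>{-kf d..kf d}. \<psi> d (cos (pi/4 + i * Df d)) * \<psi> d (sin (pi/4 + i * Df d))))
           \<longlongrightarrow> L^2 * integral {0..pi/2} (FF m)) (at_right 0)"
proof (rule tendstoI)
  fix \<epsilon> :: real assume ep: "\<epsilon> > 0"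
  have K0: "0 \<le> K" using bnd[of 1 0] by auto
  define K' where "K' = K^2 + L^2"
  have K'0: "0 \<le> K'" unfolding K'_def by simp
  define \<theta> where "\<theta> = min (pi/8) (\<epsilon> / (8 * (K' + 1)))"
  have th0: "0 < \<theta>" unfolding \<theta>_def using ep K'0 by simp
  have th1: "\<theta> \<le> pi/8" unfolding \<theta>_def by (rule min.cobounded1)
  have th2: "2 * K' * \<theta> \<le> \<epsilon> / 4"
  proof -
    have "\<theta> \<le> \<epsilon> / (8 * (K' + 1))" unfolding \<theta>_def by simp
    then have "2 * K' * \<theta> \<le> 2 * K' * (\<epsilon> / (8 * (K' + 1)))" using K'0 by (intro mult_left_mono) auto
    also have "\<dots> = \<epsilon> / 4 * (K' / (K' + 1))" using K'0 by (simp add: field_simps)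
    also have "\<dots> \<le> \<epsilon> / 4 * 1" using K'0 ep by (intro mult_left_mono) auto
    finally show ?thesis by simp
  qed
  define \<rho> where "\<rho> = sin \<theta>"
  have rho0: "0 < \<rho>" unfolding \<rho>_def using th0 th1 pi_gt3 by (intro sin_gt_zero) auto
  define \<epsilon>1 where "\<epsilon>1 = \<epsilon> / 12"
  define \<epsilon>2 where "\<epsilon>2 = \<epsilon>1 / (K + \<bar>L\<bar> + 1)"
  have e2: "0 < \<epsilon>2" unfolding \<epsilon>2_def \<epsilon>1_def using ep K0 by (simp add: add_nonneg_pos)
  have e12: "(K + \<bar>L\<bar>) * \<epsilon>2 \<le> \<epsilon>1"
  proof -
    have "(K + \<bar>L\<bar>) * \<epsilon>2 = \<epsilon>1 * ((K + \<bar>L\<bar>) / (K + \<bar>L\<bar> + 1))"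
      unfolding \<epsilon>2_def using K0 by (simp add: field_simps)
    also have "\<dots> \<le> \<epsilon>1 * 1" unfolding \<epsilon>1_def using ep K0 by (intro mult_left_mono) auto
    finally show ?thesis by simp
  qed
  obtain \<delta> where d0: "\<delta> > 0" and dconv: "\<forall>d c. 0 < d \<longrightarrow> d < \<delta> \<longrightarrow> \<rho> \<le> c \<longrightarrow> c \<le> 1 \<longrightarrow> \<bar>\<psi> d c - L * c^m\<bar> \<le> \<epsilon>2"
    using conv[OF rho0 e2] by blast
  define C where "C = L^2 * (2 + 2 * real m) + 2 * K' + 1"
  have C0: "0 < C" unfolding C_def using K'0 by (simp add: add_nonneg_pos)
  define \<tau> where "\<tau> = min 1 (\<epsilon> / (8 * C))"
  have tau0: "0 < \<tau>" unfolding \<tau>_def using ep C0 by simp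
  have ev1: "eventually (\<lambda>d. Df d < \<tau>) (at_right 0)"
    using Dl tau0 by (auto simp: tendsto_iff dist_real_def dest!: spec[of _ \<tau>] elim: eventually_mono)
  have ev2: "eventually (\<lambda>d. 0 < d \<and> d < min \<delta> 1) (at_right 0)"
    using d0 by (auto simp: eventually_at_right_field intro!: exI[of _ "min \<delta> 1"])
  show "eventually (\<lambda>d. dist (Df d * (\<Sum>i\<in>{-kf d..kf d}. \<psi> d (cos (pi/4 + i * Df d)) * \<psi> d (sin (pi/4 + i * Df d))))
           (L^2 * integral {0..pi/2} (FF m)) < \<epsilon>) (at_right 0)"
    using ev1 ev2 Dk
  proof eventually_elim
    case (elim d)
    define \<Delta> where "\<Delta> = Df d"
    define k where "k = kf d"
    have D0: "0 < \<Delta>" and D1: "\<Delta> \<le> 1" and k1: "k * \<Delta> \<le> pi/4" and k2: "pi/4 - \<Delta> < k * \<Delta>"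
      and Dt: "\<Delta> < \<tau>"
      using elim unfolding \<Delta>_def k_def \<tau>_def by auto
    have dd: "0 < d" "d < \<delta>" "d \<le> 1" using elim by auto
    define e where "e x = \<psi> d (cos x) * \<psi> d (sin x) - L^2 * FF m x" for x
    have eK: "\<bar>e x\<bar> \<le> K'" if "0 \<le> x" "x \<le> pi/2" for x
    proof -
      have "0 \<le> cos x" "0 \<le> sin x" using that pi_gt3 by (auto intro!: cos_ge_zero sin_ge_zero)
      then have b1: "\<bar>\<psi> d (cos x)\<bar> \<le> K" "\<bar>\<psi> d (sin x)\<bar> \<le> K" using bnd dd by auto
      have "\<bar>\<psi> d (cos x) * \<psi> d (sin x)\<bar> \<le> K * K" unfolding abs_mult using b1
        by (intro mult_mono) auto
      moreover have "\<bar>L^2 * FF m x\<bar> \<le> L^2 * 1" unfolding abs_mult using FF_abs[of m x]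
        by (simp add: mult_left_le)
      ultimately show ?thesis unfolding e_def K'_def by (simp add: power2_eq_square)
    qed
    have ee: "\<bar>e x\<bar> \<le> \<epsilon>1" if "\<theta> \<le> x" "x \<le> pi/2 - \<theta>" for x
    proof -
      have s1: "\<rho> \<le> sin x" unfolding \<rho>_def using that th0 th1 by (intro sin_monotone_2pi_le) auto
      have "\<rho> \<le> sin (pi/2 - x)" unfolding \<rho>_def using that th0 th1 by (intro sin_monotone_2pi_le) auto
      then have c1: "\<rho> \<le> cos x" by (simp add: sin_cos_eq)
      have a1: "\<bar>\<psi> d (cos x) - L * cos x ^ m\<bar> \<le> \<epsilon>2" using dconv dd c1 by auto
      have a2: "\<bar>\<psi> d (sin x) - L * sin x ^ m\<bar> \<le> \<epsilon>2" using dconv dd s1 by auto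
      have b1: "\<bar>\<psi> d (cos x)\<bar> \<le> K" using bnd dd c1 rho0 by auto
      have sm: "\<bar>sin x ^ m\<bar> \<le> 1" by (metis abs_ge_zero abs_sin_le_one power_abs power_le_one)
      have "e x = \<psi> d (cos x) * (\<psi> d (sin x) - L * sin x ^ m) + L * sin x ^ m * (\<psi> d (cos x) - L * cos x ^ m)"
        unfolding e_def FF_def by (simp add: power_mult_distrib power2_eq_square algebra_simps)
      then have "\<bar>e x\<bar> \<le> \<bar>\<psi> d (cos x)\<bar> * \<bar>\<psi> d (sin x) - L * sin x ^ m\<bar> + \<bar>L\<bar> * \<bar>sin x ^ m\<bar> * \<bar>\<psi> d (cos x) - L * cos x ^ m\<bar>"
        by (simp add: abs_mult[symmetric] abs_triangle_ineq)
      also have "\<dots> \<le> K * \<epsilon>2 + \<bar>L\<bar> * 1 * \<epsilon>2"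
        using b1 a1 a2 sm by (intro add_mono mult_mono) auto
      also have "\<dots> \<le> \<epsilon>1" using e12 by (simp add: algebra_simps)
      finally show ?thesis .
    qed
    have err: "\<Delta> * (\<Sum>i\<in>{-k..k}. \<bar>e (pi/4 + i*\<Delta>)\<bar>) \<le> 3 * \<epsilon>1 + 2 * K' * (\<theta> + \<Delta>)"
      by (rule riemann_err[OF D0 D1 k1 k2 th0 _ eK ee]) (use ep in \<open>auto simp: \<epsilon>1_def\<close>)
    have rf: "\<bar>\<Delta> * (\<Sum>i\<in>{-k..k}. FF m (pi/4 + i*\<Delta>)) - integral {0..pi/2} (FF m)\<bar> \<le> (2 + 2*real m) * \<Delta>"
      by (rule riemann_FF[OF D0 D1 k1 k2])
    have split: "\<Delta> * (\<Sum>i\<in>{-k..k}. \<psi> d (cos (pi/4 + i * \<Delta>)) * \<psi> d (sin (pi/4 + i * \<Delta>))) - L^2 * integral {0..pi/2} (FF m)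
       = L^2 * (\<Delta> * (\<Sum>i\<in>{-k..k}. FF m (pi/4 + i*\<Delta>)) - integral {0..pi/2} (FF m)) + \<Delta> * (\<Sum>i\<in>{-k..k}. e (pi/4 + i*\<Delta>))"
      unfolding e_def by (simp add: sum.distrib sum_subtractf sum_distrib_left algebra_simps)
    have t1: "\<bar>L^2 * (\<Delta> * (\<Sum>i\<in>{-k..k}. FF m (pi/4 + i*\<Delta>)) - integral {0..pi/2} (FF m))\<bar> \<le> L^2 * ((2 + 2*real m) * \<Delta>)"
      unfolding abs_mult abs_power2 using rf by (intro mult_left_mono) auto
    have t2: "\<bar>\<Delta> * (\<Sum>i\<in>{-k..k}. e (pi/4 + i*\<Delta>))\<bar> \<le> \<Delta> * (\<Sum>i\<in>{-k..k}. \<bar>e (pi/4 + i*\<Delta>)\<bar>)"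
      unfolding abs_mult using D0 sum_abs[of "\<lambda>i. e (pi/4 + i*\<Delta>)" "{-k..k}"] by (simp add: mult_left_mono)
    have t3: "C * \<Delta> \<le> \<epsilon> / 8"
    proof -
      have "\<Delta> \<le> \<epsilon> / (8 * C)" using Dt unfolding \<tau>_def by simp
      then have "C * \<Delta> \<le> C * (\<epsilon> / (8 * C))" using C0 by (intro mult_left_mono) auto
      then show ?thesis using C0 by simp
    qed
    have "L^2 * ((2 + 2*real m) * \<Delta>) + 2 * K' * \<Delta> \<le> C * \<Delta>" unfolding C_def using D0 by (simp add: algebra_simps)
    then have "\<bar>\<Delta> * (\<Sum>i\<in>{-k..k}. \<psi> d (cos (pi/4 + i * \<Delta>)) * \<psi> d (sin (pi/4 + i * \<Delta>))) - L^2 * integral {0..pi/2} (FF m)\<bar> < \<epsilon>"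
      unfolding split using t1 t2 err t3 th2 ep unfolding \<epsilon>1_def by (simp add: algebra_simps) linarith?
    then show ?case unfolding \<Delta>_def k_def dist_real_def .
  qed
qed

lemma sep_bound:
  fixes e :: real
  assumes e0: "e > 0"
  shows "\<exists>N. \<forall>A::('a::euclidean_space) set. finite A \<longrightarrow> A \<subseteq> sphere 0 1 \<longrightarrow>
           (\<forall>x\<in>A. \<forall>y\<in>A. x \<noteq> y \<longrightarrow> e \<le> dist x y) \<longrightarrow> card A \<le> N"
proof -
  have cs: "compact (sphere (0::'a) 1)" by (rule compact_sphere)
  have cov: "sphere (0::'a) 1 \<subseteq> (\<Union>c\<in>sphere 0 1. ball c (e/2))" using e0 by force
  obtain C' where C': "C' \<subseteq> sphere (0::'a) 1" "finite C'" "sphere 0 1 \<subseteq> (\<Union>c\<in>C'. ball c (e/2))"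
    by (rule compactE_image[OF cs, where C="sphere 0 1" and f="\<lambda>c. ball c (e/2)"]) (use cov in auto)
  show ?thesis
  proof (intro exI allI impI)
    fix A :: "'a set" assume fA: "finite A" and As: "A \<subseteq> sphere 0 1"
      and sep: "\<forall>x\<in>A. \<forall>y\<in>A. x \<noteq> y \<longrightarrow> e \<le> dist x y"
    define h where "h a = (SOME c. c \<in> C' \<and> a \<in> ball c (e/2))" for a
    have hp: "h a \<in> C' \<and> a \<in> ball (h a) (e/2)" if "a \<in> A" for a
    proof -
      have "\<exists>c. c \<in> C' \<and> a \<in> ball c (e/2)" using that As C'(3) by blast
      then show ?thesis unfolding h_def by (rule someI_ex)
    qed
    have "inj_on h A"
    proof (rule inj_onI, rule ccontr)
      fix a b assume ab: "a \<in> A" "b \<in> A" "h a = h b" "a \<noteq> b"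
      have "dist a b \<le> dist a (h a) + dist (h b) b" using ab(3) dist_triangle[of a b "h a"]
        by (simp add: dist_commute)
      also have "\<dots> < e/2 + e/2" using hp[OF ab(1)] hp[OF ab(2)] by (intro add_strict_mono) (auto simp: dist_commute)
      finally show False using sep ab by force
    qed
    moreover have "h ` A \<subseteq> C'" using hp by auto
    ultimately show "card A \<le> card C'" using C'(2) by (rule card_inj_on_le)
  qed
qed

theorem proposition4:
  fixes C :: "real \<Rightarrow> (real ^ 'n) set" and D :: real
  assumes n2: "CARD('n) \<ge> 2"
    and codes: "\<And>d'. d' > 0 \<Longrightarrow> spherical_code d' (C d')"
    and one_point: "\<And>d'. d' > 2 \<Longrightarrow> card (C d') = 1"
    and dens: "((\<lambda>d. real (card (C d)) / sphere_area CARD('n) * (d / 2) ^ (CARD('n) - 1))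
                 \<longlongrightarrow> D) (at_right 0)"
  shows "((\<lambda>d. real (schf_card (\<lambda>d'. card (C d')) d) / sphere_area (2 * CARD('n))
                 * (d / 2) ^ (2 * CARD('n) - 1)) \<longlongrightarrow> D ^ 2 / 2) (at_right 0)"
proof -
  define n where "n = CARD('n)"
  define m where "m = n - 1"
  have n2': "n \<ge> 2" using n2 unfolding n_def by simp
  have nm: "n = m + 1" unfolding m_def using n2' by simp
  have m1: "m \<ge> 1" unfolding m_def using n2' by simp
  define M where "M x = card (C x)" for x
  define S where "S = sphere_area n"
  have S0: "S > 0" unfolding S_def sphere_area_def using n2' by (intro divide_pos_pos mult_pos_pos) auto
  define L where "L = D * S * 2^m"
  define g where "g x = real (M x) * x^m" for x
  have Lg: "(g \<longlongrightarrow> L) (at_right 0)"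
  proof -
    have "((\<lambda>d. real (card (C d)) / sphere_area CARD('n) * (d / 2) ^ (CARD('n) - 1) * (S * 2^m)) \<longlongrightarrow> D * (S * 2^m)) (at_right 0)"
      by (intro tendsto_mult_right dens)
    moreover have "real (card (C d)) / sphere_area CARD('n) * (d / 2) ^ (CARD('n) - 1) * (S * 2^m) = g d" for d
      unfolding g_def M_def S_def n_def[symmetric] m_def[symmetric] using S0[unfolded S_def]
      by (simp add: power_divide field_simps)
    ultimately show ?thesis unfolding L_def by (simp add: mult.assoc)
  qed
  have gnn: "0 \<le> g x" if "0 \<le> x" for x unfolding g_def using that by simp
  obtain B where B: "\<And>x. 0 < x \<Longrightarrow> x \<le> 2 \<Longrightarrow> g x \<le> B"
  proof -
    obtain b where b0: "b > 0" and bg: "\<And>x. 0 < x \<Longrightarrow> x < b \<Longrightarrow> g x < L + 1"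
    proof -
      have "eventually (\<lambda>x. g x < L + 1) (at_right 0)"
        using Lg by (rule order_tendstoD) simp
      then show ?thesis using that unfolding eventually_at_right_field by auto
    qed
    obtain N where N: "\<And>A::(real^'n) set. finite A \<Longrightarrow> A \<subseteq> sphere 0 1 \<Longrightarrow>
           (\<forall>x\<in>A. \<forall>y\<in>A. x \<noteq> y \<longrightarrow> b \<le> dist x y) \<Longrightarrow> card A \<le> N"
      using sep_bound[OF b0, where 'a="real^'n"] by blast
    show ?thesis
    proof (rule that[of "max (L + 1) (real N * 2^m)"])
      fix x :: real assume x: "0 < x" "x \<le> 2"
      show "g x \<le> max (L + 1) (real N * 2^m)"
      proof (cases "x < b")
        case True then show ?thesis using bg x by force
      next
        case False
        have sc: "spherical_code x (C x)" using codes x by simp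
        have "card (C x) \<le> N"
          using sc False unfolding spherical_code_def by (intro N) force+
        then have "real (M x) \<le> real N" unfolding M_def by simp
        moreover have "x^m \<le> 2^m" using x by (intro power_mono) auto
        ultimately have "g x \<le> real N * 2^m" unfolding g_def using x by (intro mult_mono) auto
        then show ?thesis by simp
      qed
    qed
  qed
  define K where "K = max 1 B"
  define \<psi> where "\<psi> d c = d^m * real (card_div M d c)" for d c
  have bnd: "\<bar>\<psi> d c\<bar> \<le> K" if "0 < d" "d \<le> 1" "0 \<le> c" "c \<le> 1" for d c
  proof -
    have dm: "d^m \<le> 1" using that by (simp add: power_le_one)
    have "\<psi> d c \<le> K"
    proof (cases "c = 0 \<or> d / c > 2")
      case True
      then have "card_div M d c = 1" unfolding card_div_def M_def using one_point by auto
      then show ?thesis unfolding \<psi>_def K_def using dm by simp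
    next
      case False
      then have c0: "c > 0" and dc: "d / c \<le> 2" using that by auto
      have "\<psi> d c = c^m * g (d / c)"
        unfolding \<psi>_def g_def card_div_def using c0 by (simp add: power_divide field_simps)
      also have "\<dots> \<le> 1 * g (d / c)"
        using that c0 gnn[of "d/c"] by (intro mult_right_mono power_le_one) auto
      also have "\<dots> \<le> B" using B[of "d/c"] c0 dc that by simp
      finally show ?thesis unfolding K_def by simp
    qed
    moreover have "0 \<le> \<psi> d c" unfolding \<psi>_def using that by simp
    ultimately show ?thesis by simp
  qed
  have conv: "\<exists>\<delta>>0. \<forall>d c. 0 < d \<longrightarrow> d < \<delta> \<longrightarrow> \<rho> \<le> c \<longrightarrow> c \<le> 1 \<longrightarrow> \<bar>\<psi> d c - L * c^m\<bar> \<le> \<epsilon>"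
    if rho: "\<rho> > 0" and ep: "\<epsilon> > 0" for \<rho> \<epsilon>
  proof -
    have "eventually (\<lambda>x. dist (g x) L < \<epsilon>) (at_right 0)" using Lg ep by (rule tendstoD)
    then obtain b where b0: "b > 0" and bg: "\<And>x. 0 < x \<Longrightarrow> x < b \<Longrightarrow> \<bar>g x - L\<bar> < \<epsilon>"
      unfolding eventually_at_right_field dist_real_def by auto
    show ?thesis
    proof (intro exI[of _ "\<rho> * b"] conjI allI impI)
      show "0 < \<rho> * b" using rho b0 by simp
      fix d c assume d: "0 < d" "d < \<rho> * b" and c: "\<rho> \<le> c" "c \<le> 1"
      have c0: "c > 0" using rho c by simp
      have "d < c * b" using d c b0 by (meson less_le_trans mult_right_mono less_imp_le)
      then have dcb: "d / c < b" using c0 by (simp add: divide_less_eq mult.commute)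
      have "\<psi> d c - L * c^m = c^m * (g (d / c) - L)"
        unfolding \<psi>_def g_def card_div_def using c0 by (simp add: power_divide field_simps)
      then have "\<bar>\<psi> d c - L * c^m\<bar> = c^m * \<bar>g (d / c) - L\<bar>" using c0 by (simp add: abs_mult)
      also have "\<dots> \<le> 1 * \<epsilon>"
        using bg[of "d/c"] dcb d c0 c by (intro mult_mono power_le_one) auto
      finally show "\<bar>\<psi> d c - L * c^m\<bar> \<le> \<epsilon>" by simp
    qed
  qed
  define Df where "Df d = 2 * arcsin (d / 2)" for d :: real
  define kf where "kf d = \<lfloor>pi / (4 * arcsin (d / 2))\<rfloor> div 2" for d :: real
  have ratio: "((\<lambda>d. Df d / d) \<longlongrightarrow> 1) (at_right 0)"
  proof -
    have "(arcsin has_field_derivative inverse (sqrt (1 - 0\<^sup>2))) (at 0)"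
      by (rule DERIV_arcsin) auto
    then have h: "((\<lambda>y. arcsin y / y) \<longlongrightarrow> 1) (at 0)"
      unfolding has_field_derivative_iff by simp
    have f: "filterlim (\<lambda>d::real. d / 2) (at 0) (at_right 0)"
    proof (rule filterlim_atI)
      show "((\<lambda>d::real. d / 2) \<longlongrightarrow> 0) (at_right 0)"
        by (auto intro!: tendsto_eq_intros)
      show "eventually (\<lambda>d::real. d / 2 \<noteq> 0) (at_right 0)"
        by (auto simp: eventually_at_right_field intro!: exI[of _ 1])
    qed
    have "((\<lambda>d. arcsin (d/2) / (d/2)) \<longlongrightarrow> 1) (at_right 0)"
      using filterlim_compose[OF h f] by (simp add: o_def)
    then show ?thesis unfolding Df_def by (simp add: field_simps)
  qed
  have Dl: "(Df \<longlongrightarrow> 0) (at_right 0)"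
  proof -
    have "((\<lambda>d. d * (Df d / d)) \<longlongrightarrow> 0 * 1) (at_right 0)"
      by (intro tendsto_mult ratio) (auto intro!: tendsto_eq_intros)
    moreover have "eventually (\<lambda>d. d * (Df d / d) = Df d) (at_right 0)"
      by (auto simp: eventually_at_right_field intro!: exI[of _ 1])
    ultimately show ?thesis by (simp add: Lim_transform_eventually)
  qed
  have Dk0: "0 < Df d \<and> kf d * Df d \<le> pi/4 \<and> pi/4 - Df d < kf d * Df d" if d: "0 < d" "d < 1" for d
  proof (intro conjI)
    define a where "a = arcsin (d/2)"
    have a0: "0 < a" unfolding a_def using arcsin_less_mono[of 0 "d/2"] d by simp
    define t where "t = \<lfloor>pi / (4 * a)\<rfloor>"
    have t1: "of_int t \<le> pi / (4 * a)" "pi / (4 * a) < of_int t + 1" unfolding t_def by linarith+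
    have kt: "2 * kf d \<le> t" "t \<le> 2 * kf d + 1" unfolding kf_def t_def a_def by presburger+
    have Dfa: "Df d = 2 * a" unfolding Df_def a_def ..
    show "0 < Df d" using a0 Dfa by simp
    show "kf d * Df d \<le> pi/4"
    proof -
    have "real_of_int (2 * kf d) \<le> pi / (4 * a)" using kt t1 by (meson of_int_le_iff order_trans)
    then have "real_of_int (2 * kf d) * a \<le> pi / 4" using a0 by (simp add: field_simps)
    then show "kf d * Df d \<le> pi/4" using Dfa by (simp add: algebra_simps)
    qed
    have i: "t + 1 \<le> 2 * kf d + 2" using kt by linarith
    have "real_of_int (t + 1) \<le> real_of_int (2 * kf d + 2)" using i by (simp only: of_int_le_iff)
    then have "pi / (4 * a) < real_of_int (2 * kf d) + 2" using t1 by simp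
    then have "pi / 4 < (real_of_int (2 * kf d) + 2) * a" using a0 by (simp add: field_simps)
    then show "pi/4 - Df d < kf d * Df d" using Dfa by (simp add: algebra_simps)
  qed
  have Dk: "eventually (\<lambda>d. 0 < Df d \<and> kf d * Df d \<le> pi/4 \<and> pi/4 - Df d < kf d * Df d) (at_right 0)"
    unfolding eventually_at_right_field using Dk0 by (intro exI[of _ 1]) auto
  have main: "((\<lambda>d. Df d * (\<Sum>i\<in>{-kf d..kf d}. \<psi> d (cos (pi/4 + i * Df d)) * \<psi> d (sin (pi/4 + i * Df d))))
           \<longlongrightarrow> L^2 * integral {0..pi/2} (FF m)) (at_right 0)"
    by (rule riemann_limit[OF bnd conv Dl Dk]) auto
  have inv: "((\<lambda>d. d / Df d) \<longlongrightarrow> 1) (at_right 0)"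
  proof -
    have "((\<lambda>d. inverse (Df d / d)) \<longlongrightarrow> inverse 1) (at_right 0)"
      by (intro tendsto_inverse ratio) auto
    then show ?thesis by simp
  qed
  define S2 where "S2 = sphere_area (2 * n)"
  have lim2: "((\<lambda>d. (Df d * (\<Sum>i\<in>{-kf d..kf d}. \<psi> d (cos (pi/4 + i * Df d)) * \<psi> d (sin (pi/4 + i * Df d))))
            * (d / Df d) / (2^(2*m+1) * S2)) \<longlongrightarrow> L^2 * integral {0..pi/2} (FF m) * 1 / (2^(2*m+1) * S2)) (at_right 0)"
  proof (rule tendsto_divide[OF tendsto_mult[OF main inv] tendsto_const])
    have "S2 > 0" unfolding S2_def sphere_area_def using n2' by (intro divide_pos_pos mult_pos_pos) auto
    then show "2^(2*m+1) * S2 \<noteq> 0" by simp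
  qed
  have const: "L^2 * integral {0..pi/2} (FF m) * 1 / (2^(2*m+1) * S2) = D^2 / 2"
  proof -
    have I: "integral {0..pi/2} (FF m) = Beta (real n/2) (real n/2) / 2"
      using integral_FF[OF m1] nm by (simp add: add.commute)
    have A: "S^2 * (Beta (real n/2) (real n/2) / 2) = S2"
      unfolding S_def S2_def by (rule area_identity) (use n2' in simp)
    have S20: "S2 > 0" unfolding S2_def sphere_area_def using n2' by (intro divide_pos_pos mult_pos_pos) auto
    have "L^2 * integral {0..pi/2} (FF m) = D^2 * 2^(2*m) * (S^2 * (Beta (real n/2) (real n/2) / 2))"
      unfolding I L_def by (simp add: power_mult_distrib power_mult[symmetric] mult.commute)
    also have "\<dots> = D^2 * 2^(2*m) * S2" using A by simp
    finally have "L^2 * integral {0..pi/2} (FF m) = D^2 * 2^(2*m) * S2" .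
    then show ?thesis using S20 by (simp add: power_add)
  qed
  have pw: "(Df d * (\<Sum>i\<in>{-kf d..kf d}. \<psi> d (cos (pi/4 + i * Df d)) * \<psi> d (sin (pi/4 + i * Df d))))
            * (d / Df d) / (2^(2*m+1) * S2) =
         real (schf_card (\<lambda>d'. card (C d')) d) / sphere_area (2 * CARD('n)) * (d / 2) ^ (2 * CARD('n) - 1)"
    if Df0: "Df d \<noteq> 0" for d
  proof -
    have e2: "2 * n - 1 = 2*m+1" using nm by simp
    have sc: "real (schf_card (\<lambda>d'. card (C d')) d) =
        (\<Sum>i\<in>{-kf d..kf d}. real (card_div M d (cos (pi/4 + i * Df d))) * real (card_div M d (sin (pi/4 + i * Df d))))"
      unfolding schf_card_def Let_def kf_def Df_def M_def by simp
    have ps: "(\<Sum>i\<in>{-kf d..kf d}. \<psi> d (cos (pi/4 + i * Df d)) * \<psi> d (sin (pi/4 + i * Df d)))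
       = d^(2*m) * (\<Sum>i\<in>{-kf d..kf d}. real (card_div M d (cos (pi/4 + i * Df d))) * real (card_div M d (sin (pi/4 + i * Df d))))"
    proof -
      have "d^(2*m) = d^m * d^m" by (simp add: mult_2 power_add)
      then show ?thesis unfolding \<psi>_def sum_distrib_left by (intro sum.cong refl) (simp add: algebra_simps)
    qed
    show ?thesis
      unfolding n_def[symmetric] e2 S2_def[symmetric] sc ps using Df0
      by (simp add: power_add power_divide field_simps)
  qed
  have ev: "eventually (\<lambda>d. (Df d * (\<Sum>i\<in>{-kf d..kf d}. \<psi> d (cos (pi/4 + i * Df d)) * \<psi> d (sin (pi/4 + i * Df d))))
            * (d / Df d) / (2^(2*m+1) * S2) =
         real (schf_card (\<lambda>d'. card (C d')) d) / sphere_area (2 * CARD('n)) * (d / 2) ^ (2 * CARD('n) - 1)) (at_right 0)"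
    using Dk by (rule eventually_mono) (intro pw, simp)
  show ?thesis
    using Lim_transform_eventually[OF lim2 ev] unfolding const .
qed

end
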